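(* Let $\mathcal X,\mathcal Y$ be complex Hilbert spaces and $A:\mathcal X\supset\operatorname{dom}A\to\mathcal Y$ a closed, densely defined linear operator with $\|Ax\|_{\mathcal Y}\ge c\|x\|_{\mathcal X}$ for some $c>0$ and all $x\in\operatorname{dom}A$. Let $\mathcal X_h$ be $\operatorname{dom}A$ with inner product $\langle x,y\rangle_{\mathcal X_h}=\langle Ax,Ay\rangle_{\mathcal Y}$ and $\mathcal Z_h=\mathcal X_h\times\mathcal X$ with the product inner product. Let $B:\mathcal Y\supset\operatorname{dom}B\to\mathcal X$ be closed, densely defined, with $A^*\subset-B$, and define $\mathcal A$ on $\mathcal Z_h$ by $\operatorname{dom}\mathcal A=\{(z_1,z_2)\in\mathcal X_h\times\mathcal X_h: Az_1\in\operatorname{dom}B\}$, $\mathcal A(z_1,z_2)=(z_2,BAz_1)$. Let $\mathcal G_1,\mathcal G_2$ be Hilbert spaces and let $\Lambda=(\Lambda_1,\Lambda_2):\operatorname{dom}A\to\mathcal G_1\times\mathcal G_2^*$ and $\Pi=(\Pi_1,\Pi_2):\operatorname{dom}B\to\mathcal G_1^*\times\mathcal G_2$ be linear maps forming a boundary triplet for the dual pair $(A^*,-B^* )$, i.e. $\Lambda$ and $\Pi$ are surjective and $-\langle By,x\rangle_{\mathcal X}-\langle y,Ax\rangle_{\mathcal Y}=\langle\Pi_1y,\Lambda_1x\rangle_{\mathcal G_1^*,\mathcal G_1}-\langle\Pi_2y,\Lambda_2x\rangle_{\mathcal G_2,\mathcal G_2^*}$ for all $y\in\operatorname{dom}B$,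 $x\in\operatorname{dom}A$. Let $\mathcal G:=\mathcal G_1\times\mathcal G_2$, $\mathcal G^*=\mathcal G_1^*\times\mathcal G_2^*$, and define on $\operatorname{dom}\mathcal A$ $\Gamma_0(z_1,z_2)=(\Lambda_1z_2,\ \Pi_2Az_1)\in\mathcal G$, $\Gamma_1(z_1,z_2)=(-\Pi_1Az_1,\ \Lambda_2z_2)\in\mathcal G^*$. Then $(\mathcal G,\Gamma_0,\Gamma_1)$ is a boundary triplet for $\mathcal A$: the map $(\Gamma_0,\Gamma_1):\operatorname{dom}\mathcal A\to\mathcal G\times\mathcal G^*$ is surjective and $\langle\mathcal Af,g\rangle_{\mathcal Z_h}+\langle f,\mathcal Ag\rangle_{\mathcal Z_h}=\langle\Gamma_1f,\Gamma_0g\rangle_{\mathcal G^*,\mathcal G}+\langle\Gamma_0f,\Gamma_1g\rangle_{\mathcal G,\mathcal G^*}$ for all $f,g\in\operatorname{dom}\mathcal A$.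
   Context: All Hilbert spaces are complex. For a Hilbert space $\mathcal H$, $\mathcal H^*$ denotes its anti-dual (bounded conjugate-linear functionals), $\langle\cdot,\cdot\rangle_{\mathcal H^*,\mathcal H}$ the duality pairing and $\langle h,\phi\rangle_{\mathcal H,\mathcal H^*}:=\overline{\langle\phi,h\rangle_{\mathcal H^*,\mathcal H}}$. The dual-pair relation $A^*\subset-B$ is equivalent to $B^*\subset -A$. It is known that $\mathcal A$ is closed, densely defined and $\mathcal A^*\subset-\mathcal A$, so that $\mathcal A$ is the adjoint of the closed densely defined skew-symmetric operator $\mathcal A^*$. *)

theory Defs
  imports "HOL-Analysis.Analysis"
begin

class complex_vector = real_vector +
  fixes scaleC :: "complex \<Rightarrow> 'a \<Rightarrow> 'a" (infixr \<open>*\<^sub>C\<close> 75)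
  assumes scaleC_add_right: "a *\<^sub>C (x + y) = a *\<^sub>C x + a *\<^sub>C y"
    and scaleC_add_left: "(a + b) *\<^sub>C x = a *\<^sub>C x + b *\<^sub>C x"
    and scaleC_scaleC: "a *\<^sub>C (b *\<^sub>C x) = (a * b) *\<^sub>C x"
    and scaleC_one: "1 *\<^sub>C x = x"
    and scaleR_scaleC: "scaleR r x = complex_of_real r *\<^sub>C x"

text \<open>Complex inner product spaces. The inner product is linear in the first and
  conjugate-linear in the second argument; the norm is the induced one.\<close>
class complex_inner = complex_vector + real_normed_vector +
  fixes cinner :: "'a \<Rightarrow> 'a \<Rightarrow> complex"
  assumes cinner_commute: "cinner x y = cnj (cinner y x)"
    and cinner_add_left: "cinner (x + y) z = cinner x z + cinner y z"
    and cinner_scaleC_left: "cinner (a *\<^sub>C x) y = a * cinner x y"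
    and cinner_ge_zero: "0 \<le> Re (cinner x x)"
    and cinner_eq_zero_iff: "cinner x x = 0 \<longleftrightarrow> x = 0"
    and norm_eq_sqrt_cinner: "norm x = sqrt (Re (cinner x x))"

text \<open>A complex Hilbert space is a type of class complex_inner that is also complete_space.
  The classes are inhabited: complex itself is an instance.\<close>

instantiation complex :: complex_vector
begin
definition scaleC_complex_def: "scaleC a (x::complex) = a * x"
instance
  by standard (auto simp: scaleC_complex_def algebra_simps scaleR_conv_of_real)
end

instantiation complex :: complex_inner
begin
definition cinner_complex_def: "cinner (x::complex) y = x * cnj y"
instance
proof
  fix x y z :: complex and a :: complex
  show "cinner x y = cnj (cinner y x)" by (simp add: cinner_complex_def mult.commute)
  show "cinner (x + y) z = cinner x z + cinner y z" by (simp add: cinner_complex_def algebra_simps)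
  show "cinner (a *\<^sub>C x) y = a * cinner x y" by (simp add: cinner_complex_def scaleC_complex_def)
  show "0 \<le> Re (cinner x x)" by (simp add: cinner_complex_def)
  show "(cinner x x = 0) = (x = 0)" by (simp add: cinner_complex_def)
  show "norm x = sqrt (Re (cinner x x))"
    by (simp add: cinner_complex_def complex_mult_cnj cmod_def power2_eq_square)
qed
end

definition csubspace :: "'a::complex_vector set \<Rightarrow> bool" where
  "csubspace S \<longleftrightarrow> 0 \<in> S \<and> (\<forall>x\<in>S. \<forall>y\<in>S. x + y \<in> S) \<and> (\<forall>c. \<forall>x\<in>S. c *\<^sub>C x \<in> S)"

definition clinear_on :: "'a::complex_vector set \<Rightarrow> ('a \<Rightarrow> 'b::complex_vector) \<Rightarrow> bool" where
  "clinear_on S f \<longleftrightarrow> (\<forall>x\<in>S. \<forall>y\<in>S. f (x + y) = f x + f y) \<and> (\<forall>c. \<forall>x\<in>S. f (c *\<^sub>C x) = c *\<^sub>C f x)"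

definition clinear_on_fun :: "'a::complex_vector set \<Rightarrow> ('a \<Rightarrow> 'g \<Rightarrow> complex) \<Rightarrow> bool" where
  "clinear_on_fun S f \<longleftrightarrow> (\<forall>x\<in>S. \<forall>y\<in>S. \<forall>g. f (x + y) g = f x g + f y g)
     \<and> (\<forall>c. \<forall>x\<in>S. \<forall>g. f (c *\<^sub>C x) g = c * f x g)"

definition lin_op :: "'a::complex_vector set \<Rightarrow> ('a \<Rightarrow> 'b::complex_vector) \<Rightarrow> bool" where
  "lin_op D T \<longleftrightarrow> csubspace D \<and> clinear_on D T"

definition closed_op :: "'a::topological_space set \<Rightarrow> ('a \<Rightarrow> 'b::topological_space) \<Rightarrow> bool" where
  "closed_op D T \<longleftrightarrow> closed {(x, T x) | x. x \<in> D}"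

definition densely_defined :: "'a::topological_space set \<Rightarrow> bool" where
  "densely_defined D \<longleftrightarrow> closure D = UNIV"

definition adjoint_graph :: "'a::complex_inner set \<Rightarrow> ('a \<Rightarrow> 'b::complex_inner) \<Rightarrow> ('b \<times> 'a) set" where
  "adjoint_graph D T = {(y, w). \<forall>x\<in>D. cinner (T x) y = cinner x w}"

text \<open>The relation A^* \<subseteq> -B between operators A (domain DA) and B (domain DB).\<close>
definition adj_sub_neg :: "'a::complex_inner set \<Rightarrow> ('a \<Rightarrow> 'b::complex_inner) \<Rightarrow> 'b set \<Rightarrow> ('b \<Rightarrow> 'a) \<Rightarrow> bool" where
  "adj_sub_neg DA A DB B \<longleftrightarrow> (\<forall>(y, w) \<in> adjoint_graph DA A. y \<in> DB \<and> B y = - w)"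

text \<open>Anti-dual: bounded conjugate-linear functionals; the pairing of phi with h is phi h.\<close>
definition antidual :: "('a::complex_inner \<Rightarrow> complex) set" where
  "antidual = {\<phi>. (\<forall>x y. \<phi> (x + y) = \<phi> x + \<phi> y) \<and> (\<forall>c x. \<phi> (c *\<^sub>C x) = cnj c * \<phi> x)
                  \<and> (\<exists>K. \<forall>x. cmod (\<phi> x) \<le> K * norm x)}"

definition prod_pairing :: "('g1 \<Rightarrow> complex) \<times> ('g2 \<Rightarrow> complex) \<Rightarrow> 'g1 \<times> 'g2 \<Rightarrow> complex" where
  "prod_pairing \<phi> h = fst \<phi> (fst h) + snd \<phi> (snd h)"

text \<open>Boundary triplet for the dual pair (A^*, -B^*):
  Lambda = (L1, L2) on dom A into G1 x G2^*, Pi = (P1, P2) on dom B into G1^* x G2.\<close>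
definition bt_dual_pair ::
  "'x::complex_inner set \<Rightarrow> ('x \<Rightarrow> 'y::complex_inner) \<Rightarrow> 'y set \<Rightarrow> ('y \<Rightarrow> 'x)
   \<Rightarrow> ('x \<Rightarrow> 'g1::complex_inner) \<Rightarrow> ('x \<Rightarrow> 'g2::complex_inner \<Rightarrow> complex)
   \<Rightarrow> ('y \<Rightarrow> 'g1 \<Rightarrow> complex) \<Rightarrow> ('y \<Rightarrow> 'g2) \<Rightarrow> bool" where
  "bt_dual_pair DA A DB B L1 L2 P1 P2 \<longleftrightarrow>
     clinear_on DA L1 \<and> clinear_on_fun DA L2 \<and> clinear_on_fun DB P1 \<and> clinear_on DB P2 \<and>
     (\<lambda>x. (L1 x, L2 x)) ` DA = UNIV \<times> antidual \<and>
     (\<lambda>y. (P1 y, P2 y)) ` DB = antidual \<times> UNIV \<and>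
     (\<forall>y\<in>DB. \<forall>x\<in>DA. - cinner (B y) x - cinner y (A x)
                       = P1 y (L1 x) - cnj (L2 x (P2 y)))"

definition boundary_triplet ::
  "'z set \<Rightarrow> ('z \<Rightarrow> 'z) \<Rightarrow> ('z \<Rightarrow> 'z \<Rightarrow> complex)
   \<Rightarrow> ('z \<Rightarrow> 'g1::complex_inner \<times> 'g2::complex_inner)
   \<Rightarrow> ('z \<Rightarrow> ('g1 \<Rightarrow> complex) \<times> ('g2 \<Rightarrow> complex)) \<Rightarrow> bool" where
  "boundary_triplet D T ip G0 G1 \<longleftrightarrow>
     (\<lambda>f. (G0 f, G1 f)) ` D = UNIV \<times> (antidual \<times> antidual) \<and>
     (\<forall>f\<in>D. \<forall>g\<in>D. ip (T f) g + ip f (T g)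
                     = prod_pairing (G1 f) (G0 g) + cnj (prod_pairing (G1 g) (G0 f)))"

definition Zh_inner :: "('x \<Rightarrow> 'y::complex_inner) \<Rightarrow> 'x::complex_inner \<times> 'x \<Rightarrow> 'x \<times> 'x \<Rightarrow> complex" where
  "Zh_inner A f g = cinner (A (fst f)) (A (fst g)) + cinner (snd f) (snd g)"

definition calA_dom :: "'x set \<Rightarrow> ('x \<Rightarrow> 'y) \<Rightarrow> 'y set \<Rightarrow> ('x \<times> 'x) set" where
  "calA_dom DA A DB = {(z1, z2). z1 \<in> DA \<and> z2 \<in> DA \<and> A z1 \<in> DB}"

definition calA :: "('x \<Rightarrow> 'y) \<Rightarrow> ('y \<Rightarrow> 'x) \<Rightarrow> 'x \<times> 'x \<Rightarrow> 'x \<times> 'x" where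
  "calA A B f = (snd f, B (A (fst f)))"

definition Gamma0 :: "('x \<Rightarrow> 'y) \<Rightarrow> ('x \<Rightarrow> 'g1) \<Rightarrow> ('y \<Rightarrow> 'g2) \<Rightarrow> 'x \<times> 'x \<Rightarrow> 'g1 \<times> 'g2" where
  "Gamma0 A L1 P2 f = (L1 (snd f), P2 (A (fst f)))"

definition Gamma1 :: "('x \<Rightarrow> 'y) \<Rightarrow> ('y \<Rightarrow> 'g1 \<Rightarrow> complex) \<Rightarrow> ('x \<Rightarrow> 'g2 \<Rightarrow> complex)
    \<Rightarrow> 'x \<times> 'x \<Rightarrow> ('g1 \<Rightarrow> complex) \<times> ('g2 \<Rightarrow> complex)" where
  "Gamma1 A P1 L2 f = ((\<lambda>g. - P1 (A (fst f)) g), L2 (snd f))"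

end

theory Submission
  imports Defs
begin

lemma cinner_add_right: "cinner x (y + z) = cinner x y + cinner x (z::'a::complex_inner)"
  by (metis cinner_commute cinner_add_left complex_cnj_add)
lemma cinner_scaleC_right: "cinner x (a *\<^sub>C y) = cnj a * cinner x (y::'a::complex_inner)"
  by (metis cinner_commute cinner_scaleC_left complex_cnj_mult)
lemma cinner_zero_left[simp]: "cinner 0 (y::'a::complex_inner) = 0"
  using cinner_add_left[of "0::'a" 0 y] by simp
lemma cinner_zero_right[simp]: "cinner (y::'a::complex_inner) 0 = 0"
  by (metis cinner_commute cinner_zero_left complex_cnj_zero)
lemma cinner_minus_left: "cinner (- x) (y::'a::complex_inner) = - cinner x y"
  using cinner_add_left[of x "-x" y] by (simp add: add_eq_0_iff)
lemma cinner_minus_right: "cinner y (- x::'a::complex_inner) = - cinner y x"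
  by (metis cinner_commute cinner_minus_left complex_cnj_minus)
lemma cinner_diff_left: "cinner (x - z) (y::'a::complex_inner) = cinner x y - cinner z y"
  by (simp only: diff_conv_add_uminus cinner_add_left cinner_minus_left)
lemma cinner_diff_right: "cinner y (x - z::'a::complex_inner) = cinner y x - cinner y z"
  by (simp only: diff_conv_add_uminus cinner_add_right cinner_minus_right)
lemma scaleC_minus1: "(-1) *\<^sub>C (x::'a::complex_vector) = - x"
  using scaleR_scaleC[of "-1" x] by simp
lemma cinner_self: "cinner x x = complex_of_real ((norm (x::'a::complex_inner))^2)"
proof -
  have "Im (cinner x x) = 0" using cinner_commute[of x x]
    by (metis Im_complex_of_real Reals_cnj_iff complex_is_Real_iff)
  moreover have "Re (cinner x x) = (norm x)^2" using norm_eq_sqrt_cinner[of x] cinner_ge_zero[of x] by simp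
  ultimately show ?thesis by (simp add: complex_eq_iff)
qed
lemma norm_sq: "(norm (x::'a::complex_inner))^2 = Re (cinner x x)"
  by (simp add: cinner_self)

lemma expand: "cinner (x - t *\<^sub>C y) (x - t *\<^sub>C y) = cinner x x - cnj t * cinner x y - t * cinner y x + t * cnj t * cinner y (y::'a::complex_inner)"
  by (simp add: cinner_diff_left cinner_diff_right cinner_scaleC_left cinner_scaleC_right algebra_simps)

lemma key:
  assumes "y \<noteq> 0"
  shows "(norm (x - (cinner x y / cinner y y) *\<^sub>C y))^2 = (norm x)^2 - (cmod (cinner x y))^2 / (norm (y::'a::complex_inner))^2"
proof -
  define z where "z = cinner x y"
  define N where "N = (norm y)^2"
  have N: "N > 0" using assms by (simp add: N_def)
  have yy: "cinner y y = complex_of_real N" by (simp add: cinner_self N_def)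
  have yx: "cinner y x = cnj z" by (simp add: z_def cinner_commute[of y x])
  have zz: "z * cnj z = complex_of_real ((cmod z)^2)" by (rule complex_norm_square[symmetric])
  have "cinner (x - (z / complex_of_real N) *\<^sub>C y) (x - (z / complex_of_real N) *\<^sub>C y)
     = cinner x x - complex_of_real ((cmod z)^2 / N)"
    unfolding expand yy yx z_def[symmetric] using N zz
    by (simp add: field_simps power2_eq_square)
  hence "Re (cinner (x - (z / complex_of_real N) *\<^sub>C y) (x - (z / complex_of_real N) *\<^sub>C y)) = (norm x)^2 - (cmod z)^2 / N"
    by (simp add: cinner_self)
  thus ?thesis by (simp add: norm_sq[symmetric] yy z_def N_def)
qed

lemma cauchy_schwarz: "cmod (cinner x y) \<le> norm x * norm (y::'a::complex_inner)"
proof (cases "y = 0")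
  case True thus ?thesis by simp
next
  case False
  have "0 \<le> (norm x)^2 - (cmod (cinner x y))^2 / (norm y)^2" using key[OF False, of x] by (metis zero_le_power2)
  hence "(cmod (cinner x y))^2 \<le> (norm x * norm y)^2" using False by (simp add: field_simps power_mult_distrib)
  thus ?thesis by (simp add: power2_le_iff_abs_le)
qed

lemma parallelogram: "(norm (a + b))^2 + (norm (a - b))^2 = 2 * (norm a)^2 + 2 * (norm (b::'a::complex_inner))^2"
  unfolding norm_sq by (simp add: cinner_add_left cinner_add_right cinner_diff_left cinner_diff_right)

lemma lin_diff:
  assumes "lin_op D T" "u \<in> D" "v \<in> D"
  shows "u - v \<in> D" "T (u - v) = T u - T v"
proof -
  have s: "csubspace D" and l: "clinear_on D T" using assms(1) by (auto simp: lin_op_def)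
  have mv: "(-1) *\<^sub>C v \<in> D" using s assms(3) by (auto simp: csubspace_def)
  have e: "u - v = u + (-1) *\<^sub>C v" by (simp add: scaleC_minus1)
  show "u - v \<in> D" unfolding e using s assms(2) mv by (auto simp: csubspace_def)
  have "T (u + (-1) *\<^sub>C v) = T u + T ((-1) *\<^sub>C v)" using l assms(2) mv by (simp add: clinear_on_def)
  also have "T ((-1) *\<^sub>C v) = (-1) *\<^sub>C T v" using l assms(3) by (simp add: clinear_on_def)
  finally show "T (u - v) = T u - T v" unfolding e by (simp add: scaleC_minus1)
qed

lemma closed_range:
  fixes DA :: "'x::{complex_inner,complete_space} set" and A :: "'x \<Rightarrow> 'y::complex_inner"
  assumes lin: "lin_op DA A" and cl: "closed_op DA A" and c: "c > 0"
    and below: "\<forall>x\<in>DA. norm (A x) \<ge> c * norm x"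
  shows "closed (A ` DA)"
  unfolding closed_sequential_limits
proof (intro allI impI, elim conjE)
  fix r l assume rin: "\<forall>n. r n \<in> A ` DA" and rl: "r \<longlonglongrightarrow> l"
  have "\<forall>n. \<exists>x. x \<in> DA \<and> r n = A x" using rin by blast
  then obtain x where x0: "\<forall>n. x n \<in> DA \<and> r n = A (x n)" by metis
  hence x: "\<And>n. x n \<in> DA" "\<And>n. r n = A (x n)" by auto
  have cr: "Cauchy r" using rl by (rule LIMSEQ_imp_Cauchy)
  have "Cauchy x"
  proof (rule CauchyI)
    fix e :: real assume e: "e > 0"
    obtain M where M: "\<forall>m\<ge>M. \<forall>n\<ge>M. norm (r m - r n) < e * c"
      using CauchyD[OF cr, of "e * c"] e c by auto
    show "\<exists>M. \<forall>m\<ge>M. \<forall>n\<ge>M. norm (x m - x n) < e"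
    proof (intro exI allI impI)
      fix m n assume "M \<le> m" "M \<le> n"
      hence lt: "norm (A (x m) - A (x n)) < e * c" using M x by auto
      have "c * norm (x m - x n) \<le> norm (A (x m - x n))" using below lin_diff(1)[OF lin x(1)[of m] x(1)[of n]] by blast
      also have "\<dots> = norm (A (x m) - A (x n))" using lin_diff(2)[OF lin x(1)[of m] x(1)[of n]] by simp
      finally have "c * norm (x m - x n) < c * e" using lt by (simp add: mult.commute)
      thus "norm (x m - x n) < e" using c by simp
    qed
  qed
  then obtain a where xa: "x \<longlonglongrightarrow> a" using Cauchy_convergent_iff convergent_def by blast
  have "r = (\<lambda>n. A (x n))" using x(2) by auto
  hence tends: "(\<lambda>n. (x n, A (x n))) \<longlonglongrightarrow> (a, l)" using xa rl
    by (intro tendsto_Pair) auto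
  define Gr where "Gr = {(x, A x) | x. x \<in> DA}"
  have inG: "\<forall>n. (x n, A (x n)) \<in> Gr" using x by (auto simp: Gr_def)
  have G: "closed Gr" using cl by (simp add: closed_op_def Gr_def)
  hence H: "\<forall>xa la. (\<forall>n. xa n \<in> Gr) \<and> xa \<longlonglongrightarrow> la \<longrightarrow> la \<in> Gr"
    by (simp only: closed_sequential_limits)
  have "(a, l) \<in> Gr" using H[rule_format, OF conjI[OF inG tends]] .
  thus "l \<in> A ` DA" by (auto simp: Gr_def)
qed

lemma projection:
  fixes S :: "'a::{complex_inner, complete_space} set"
  assumes cl: "closed S" and z: "0 \<in> S" and add: "\<forall>x\<in>S. \<forall>y\<in>S. x + y \<in> S"
    and sc: "\<forall>c. \<forall>x\<in>S. c *\<^sub>C x \<in> S"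
  shows "\<exists>r\<in>S. \<forall>s\<in>S. cinner s (y - r) = 0"
proof -
  have diffS: "u - v \<in> S" if "u \<in> S" "v \<in> S" for u v
    using add sc that by (metis diff_conv_add_uminus scaleC_minus1)
  have scR: "a *\<^sub>R u \<in> S" if "u \<in> S" for a u using sc that by (simp add: scaleR_scaleC)
  define F where "F = (\<lambda>s. (norm (y - s))^2) ` S"
  define d where "d = Inf F"
  have Fne: "F \<noteq> {}" using z by (auto simp: F_def)
  have Fb: "bdd_below F" unfolding F_def by (rule bdd_belowI[of _ 0]) auto
  have dle: "d \<le> (norm (y - s))^2" if "s \<in> S" for s
    unfolding d_def F_def using Fb that by (auto intro!: cInf_lower simp: F_def)
  have "\<exists>s\<in>S. (norm (y - s))^2 < d + 1 / (real n + 1)" for n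
  proof -
    have "Inf F < d + 1 / (real n + 1)" by (simp add: d_def)
    then obtain t where "t \<in> F" "t < d + 1 / (real n + 1)" using cInf_lessD[OF Fne] by blast
    thus ?thesis by (auto simp: F_def)
  qed
  then obtain r where rS: "\<And>n. r n \<in> S" and rd: "\<And>n. (norm (y - r n))^2 < d + 1 / (real n + 1)"
    by metis
  have bound: "(norm (r m - r n))^2 \<le> 2 / (real n + 1) + 2 / (real m + 1)" for m n
  proof -
    define a where "a = y - r n"
    define b where "b = y - r m"
    have mid: "(1/2) *\<^sub>R (r n + r m) \<in> S" using rS add scR by auto
    have "a + b = 2 *\<^sub>R (y - (1/2) *\<^sub>R (r n + r m))" by (simp add: a_def b_def algebra_simps scaleR_2)
    hence "(norm (a + b))^2 = 4 * (norm (y - (1/2) *\<^sub>R (r n + r m)))^2"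
      by (simp add: power_mult_distrib)
    hence ab: "(norm (a + b))^2 \<ge> 4 * d" using dle[OF mid] by simp
    have "a - b = r m - r n" by (simp add: a_def b_def)
    hence "(norm (r m - r n))^2 = 2 * (norm a)^2 + 2 * (norm b)^2 - (norm (a + b))^2"
      using parallelogram[of a b] by simp
    thus ?thesis using ab rd[of n] rd[of m] unfolding a_def b_def by simp
  qed
  have "Cauchy r"
  proof (rule CauchyI)
    fix e :: real assume e: "e > 0"
    obtain M :: nat where M: "4 / e^2 < real M" using reals_Archimedean2 by blast
    show "\<exists>M. \<forall>m\<ge>M. \<forall>n\<ge>M. norm (r m - r n) < e"
    proof (intro exI allI impI)
      fix m n assume mM: "M \<le> m" and nM: "M \<le> n"
      have e2: "e^2 > 0" using e by simp
      have "4 / e^2 < real M + 1" using M by simp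
      hence "4 < e^2 * (real M + 1)" using e2 by (simp add: field_simps)
      hence h1: "2 / (real M + 1) < e^2 / 2" by (simp add: field_simps)
      have "2 / (real n + 1) \<le> 2 / (real M + 1)" using nM by (simp add: frac_le)
      moreover have "2 / (real m + 1) \<le> 2 / (real M + 1)" using mM by (simp add: frac_le)
      ultimately have "(norm (r m - r n))^2 < e^2" using bound[of m n] h1 by linarith
      thus "norm (r m - r n) < e" using e by (simp add: power_less_imp_less_base)
    qed
  qed
  then obtain l where rl: "r \<longlonglongrightarrow> l" using Cauchy_convergent_iff convergent_def by blast
  have H: "\<forall>xa la. (\<forall>n. xa n \<in> S) \<and> xa \<longlonglongrightarrow> la \<longrightarrow> la \<in> S"
    using cl by (simp only: closed_sequential_limits)
  have rS': "\<forall>n. r n \<in> S" using rS by simp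
  have lS: "l \<in> S" using H[rule_format, OF conjI[OF rS' rl]] .
  have "(\<lambda>n. (norm (y - r n))^2) \<longlonglongrightarrow> (norm (y - l))^2" using rl by (intro tendsto_intros)
  moreover have "(\<lambda>n. d + 1 / (real n + 1)) \<longlonglongrightarrow> d + 0"
  proof (intro tendsto_intros)
    show "(\<lambda>n. 1 / (real n + 1)) \<longlonglongrightarrow> 0"
      using LIMSEQ_inverse_real_of_nat by (simp add: inverse_eq_divide add.commute)
  qed
  ultimately have ld: "(norm (y - l))^2 \<le> d" using rd
    by (intro LIMSEQ_le[of _ _ "\<lambda>n. d + 1 / (real n + 1)"]) (auto intro: less_imp_le)
  have "cinner s (y - l) = 0" if sS: "s \<in> S" for s
  proof (cases "s = 0")
    case True thus ?thesis by simp
  next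
    case False
    define t where "t = cinner (y - l) s / cinner s s"
    have "l + t *\<^sub>C s \<in> S" using add sc lS sS by auto
    hence "d \<le> (norm (y - (l + t *\<^sub>C s)))^2" by (rule dle)
    also have "y - (l + t *\<^sub>C s) = (y - l) - t *\<^sub>C s" by simp
    also have "(norm \<dots>)^2 = (norm (y - l))^2 - (cmod (cinner (y - l) s))^2 / (norm s)^2"
      unfolding t_def by (rule key[OF False])
    finally have "(cmod (cinner (y - l) s))^2 / (norm s)^2 \<le> 0" using ld by linarith
    moreover have "(norm s)^2 > 0" using False by simp
    ultimately have "(cmod (cinner (y - l) s))^2 \<le> 0" by (simp add: divide_le_0_iff)
    hence "cmod (cinner (y - l) s) = 0" by (metis zero_le_power2 antisym zero_eq_power2)
    hence "cinner (y - l) s = 0" by simp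
    thus ?thesis by (metis cinner_commute complex_cnj_zero)
  qed
  thus ?thesis using lS by blast
qed

lemma antidual_neg: "\<phi> \<in> antidual \<Longrightarrow> (\<lambda>g. - \<phi> g) \<in> antidual"
  unfolding antidual_def by simp

lemma antidual_zero: "(\<lambda>g::'a::complex_inner. 0) \<in> antidual"
proof -
  have a: "\<forall>x y::'a. (0::complex) = 0 + 0" by simp
  have b: "\<forall>c (x::'a). (0::complex) = cnj c * 0" by simp
  have k: "\<exists>K. \<forall>x::'a. cmod 0 \<le> K * norm x" by (rule exI[of _ 0]) simp
  show ?thesis unfolding antidual_def mem_Collect_eq using a b k by blast
qed

lemma antidual_cinner: "(\<lambda>h. cinner (a::'a::complex_inner) h) \<in> antidual"
proof -
  have a: "\<forall>x y::'a. cinner a (x + y) = cinner a x + cinner a y" by (intro allI) (rule cinner_add_right)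
  have b: "\<forall>c (x::'a). cinner a (c *\<^sub>C x) = cnj c * cinner a x" by (intro allI) (rule cinner_scaleC_right)
  have k: "\<exists>K. \<forall>x::'a. cmod (cinner a x) \<le> K * norm x"
    by (intro exI[of _ "norm a"] allI) (rule cauchy_schwarz)
  show ?thesis unfolding antidual_def mem_Collect_eq by (intro conjI a b k)
qed

theorem theorem3p3:
  fixes DA :: "'x::{complex_inner, complete_space} set"
    and A :: "'x \<Rightarrow> 'y::{complex_inner, complete_space}"
    and DB :: "'y set" and B :: "'y \<Rightarrow> 'x"
    and L1 :: "'x \<Rightarrow> 'g1::{complex_inner, complete_space}"
    and L2 :: "'x \<Rightarrow> 'g2::{complex_inner, complete_space} \<Rightarrow> complex"
    and P1 :: "'y \<Rightarrow> 'g1 \<Rightarrow> complex" and P2 :: "'y \<Rightarrow> 'g2"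
    and c :: real
  assumes A_lin: "lin_op DA A" and A_closed: "closed_op DA A" and A_dense: "densely_defined DA"
    and c_pos: "c > 0" and A_below: "\<forall>x\<in>DA. norm (A x) \<ge> c * norm x"
    and B_lin: "lin_op DB B" and B_closed: "closed_op DB B" and B_dense: "densely_defined DB"
    and AB: "adj_sub_neg DA A DB B"
    and bt: "bt_dual_pair DA A DB B L1 L2 P1 P2"
  shows "boundary_triplet (calA_dom DA A DB) (calA A B) (Zh_inner A)
           (Gamma0 A L1 P2) (Gamma1 A P1 L2)"
proof -
  have P1lin: "clinear_on_fun DB P1" and P2lin: "clinear_on DB P2"
    and Lsurj: "(\<lambda>x. (L1 x, L2 x)) ` DA = UNIV \<times> antidual"
    and Psurj: "(\<lambda>y. (P1 y, P2 y)) ` DB = antidual \<times> UNIV"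
    and green: "\<forall>y\<in>DB. \<forall>x\<in>DA. - cinner (B y) x - cinner y (A x)
                       = P1 y (L1 x) - cnj (L2 x (P2 y))"
    using bt unfolding bt_dual_pair_def by auto
  have DAs: "csubspace DA" and Alin: "clinear_on DA A" using A_lin unfolding lin_op_def by auto
  have DBs: "csubspace DB" using B_lin unfolding lin_op_def by auto
  have Lget: "\<exists>x\<in>DA. L1 x = g \<and> L2 x = \<phi>" if "\<phi> \<in> antidual" for g \<phi>
  proof -
    have "(g, \<phi>) \<in> (\<lambda>x. (L1 x, L2 x)) ` DA" unfolding Lsurj using that by simp
    then obtain x where "x \<in> DA" "(g, \<phi>) = (L1 x, L2 x)" by (rule imageE)
    thus ?thesis by blast
  qed
  have Pget: "\<exists>y\<in>DB. P1 y = \<phi> \<and> P2 y = g" if "\<phi> \<in> antidual" for g \<phi>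
  proof -
    have "(\<phi>, g) \<in> (\<lambda>y. (P1 y, P2 y)) ` DB" unfolding Psurj using that by simp
    then obtain y where "y \<in> DB" "(\<phi>, g) = (P1 y, P2 y)" by (rule imageE)
    thus ?thesis by blast
  qed
  have Pant: "P1 y \<in> antidual" if "y \<in> DB" for y
  proof -
    have "(P1 y, P2 y) \<in> antidual \<times> UNIV" unfolding Psurj[symmetric] using that by (rule imageI)
    thus ?thesis by simp
  qed
  have Lant: "L2 x \<in> antidual" if "x \<in> DA" for x
  proof -
    have "(L1 x, L2 x) \<in> UNIV \<times> antidual" unfolding Lsurj[symmetric] using that by (rule imageI)
    thus ?thesis by simp
  qed
  have surj: "(\<lambda>f. (Gamma0 A L1 P2 f, Gamma1 A P1 L2 f)) ` calA_dom DA A DB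
      = UNIV \<times> (antidual \<times> antidual)"
  proof (rule subset_antisym)
    show "(\<lambda>f. (Gamma0 A L1 P2 f, Gamma1 A P1 L2 f)) ` calA_dom DA A DB \<subseteq> UNIV \<times> (antidual \<times> antidual)"
    proof (rule subsetI)
      fix p assume "p \<in> (\<lambda>f. (Gamma0 A L1 P2 f, Gamma1 A P1 L2 f)) ` calA_dom DA A DB"
      then obtain f where f: "f \<in> calA_dom DA A DB" "p = (Gamma0 A L1 P2 f, Gamma1 A P1 L2 f)" by (rule imageE)
      obtain z1 z2 where fz: "f = (z1, z2)" by (cases f)
      have z: "z1 \<in> DA" "z2 \<in> DA" "A z1 \<in> DB" using f(1) unfolding fz calA_dom_def by auto
      have "(\<lambda>g. - P1 (A z1) g) \<in> antidual" using Pant[OF z(3)] by (rule antidual_neg)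
      moreover have "L2 z2 \<in> antidual" using Lant[OF z(2)] .
      ultimately show "p \<in> UNIV \<times> (antidual \<times> antidual)" unfolding f(2) fz Gamma1_def by simp
    qed
  next
    show "UNIV \<times> (antidual \<times> antidual) \<subseteq> (\<lambda>f. (Gamma0 A L1 P2 f, Gamma1 A P1 L2 f)) ` calA_dom DA A DB"
    proof (rule subsetI)
      fix p :: "('g1 \<times> 'g2) \<times> ('g1 \<Rightarrow> complex) \<times> ('g2 \<Rightarrow> complex)"
      assume "p \<in> UNIV \<times> (antidual \<times> antidual)"
      then obtain g1 g2 \<phi>1 \<phi>2 where pdef: "p = ((g1, g2), (\<phi>1, \<phi>2))" and ph1: "\<phi>1 \<in> antidual" and ph2: "\<phi>2 \<in> antidual"
        by auto
      obtain z2 where z2: "z2 \<in> DA" "L1 z2 = g1" "L2 z2 = \<phi>2" using Lget[OF ph2] by blast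
      obtain y where y: "y \<in> DB" "P1 y = (\<lambda>g. - \<phi>1 g)" "P2 y = g2"
        using Pget[OF antidual_neg[OF ph1]] by blast
      have zero: "0 \<in> DA" using DAs by (simp add: csubspace_def)
      have A0: "A 0 = 0" using lin_diff(2)[OF A_lin zero zero] by simp
      have Rcl: "closed (A ` DA)" by (rule closed_range[OF A_lin A_closed c_pos A_below])
      have R0: "0 \<in> A ` DA" using zero A0 by (metis image_eqI)
      have Radd: "\<forall>u\<in>A ` DA. \<forall>v\<in>A ` DA. u + v \<in> A ` DA"
      proof (intro ballI)
        fix u v assume "u \<in> A ` DA" "v \<in> A ` DA"
        then obtain a b where ab: "a \<in> DA" "b \<in> DA" "u = A a" "v = A b" by blast
        hence "a + b \<in> DA" "A (a + b) = A a + A b" using DAs Alin by (auto simp: csubspace_def clinear_on_def)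
        thus "u + v \<in> A ` DA" unfolding ab by (metis image_eqI)
      qed
      have Rsc: "\<forall>k. \<forall>u\<in>A ` DA. k *\<^sub>C u \<in> A ` DA"
      proof (intro allI ballI)
        fix k u assume "u \<in> A ` DA"
        then obtain a where a: "a \<in> DA" "u = A a" by blast
        hence "k *\<^sub>C a \<in> DA" "A (k *\<^sub>C a) = k *\<^sub>C A a" using DAs Alin by (auto simp: csubspace_def clinear_on_def)
        thus "k *\<^sub>C u \<in> A ` DA" unfolding a by (metis image_eqI)
      qed
      obtain r where rR: "r \<in> A ` DA" and orth: "\<forall>s\<in>A ` DA. cinner s (y - r) = 0"
        using projection[OF Rcl R0 Radd Rsc, of y] by blast
      then obtain z1 where z1: "z1 \<in> DA" "r = A z1" by blast
      define w where "w = A z1 - y"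
      have adj: "\<forall>x\<in>DA. cinner (A x) w = cinner x 0"
      proof
        fix x assume x: "x \<in> DA"
        have "A x \<in> A ` DA" using x by (rule imageI)
        hence "cinner (A x) (y - A z1) = 0" using orth z1(2) by blast
        moreover have "w = - (y - A z1)" by (simp add: w_def)
        hence "cinner (A x) w = - cinner (A x) (y - A z1)" by (simp only: cinner_minus_right)
        ultimately show "cinner (A x) w = cinner x 0" by simp
      qed
      hence "(w, 0) \<in> adjoint_graph DA A" by (simp add: adjoint_graph_def)
      hence "w \<in> DB \<and> B w = - 0" using AB unfolding adj_sub_neg_def by blast
      hence wB: "w \<in> DB" "B w = 0" by simp_all
      have gw: "P1 w (L1 x) - cnj (L2 x (P2 w)) = 0" if "x \<in> DA" for x
      proof -
        have g: "- cinner (B w) x - cinner w (A x) = P1 w (L1 x) - cnj (L2 x (P2 w))"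
          using green wB(1) that by blast
        have "cinner (A x) w = 0" using adj that by simp
        hence "cinner w (A x) = 0" using cinner_commute[of w "A x"] by simp
        thus ?thesis using g wB(2) by simp
      qed
      have P1w: "P1 w g = 0" for g
      proof -
        obtain x where x: "x \<in> DA" "L1 x = g" "L2 x = (\<lambda>_. 0)" using Lget[OF antidual_zero] by blast
        show ?thesis using gw[OF x(1)] unfolding x(2,3) by simp
      qed
      have P2w: "P2 w = 0"
      proof -
        obtain x where x: "x \<in> DA" "L1 x = 0" "L2 x = (\<lambda>h. cinner (P2 w) h)" using Lget[OF antidual_cinner] by blast
        have "cnj (cinner (P2 w) (P2 w)) = 0" using gw[OF x(1)] P1w[of 0] unfolding x(2,3) by simp
        hence "cinner (P2 w) (P2 w) = 0" by simp
        thus ?thesis by (simp only: cinner_eq_zero_iff)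
      qed
      have Az1: "A z1 = y + w" by (simp add: w_def)
      have Az1B: "A z1 \<in> DB" unfolding Az1 using DBs y(1) wB(1) by (simp add: csubspace_def)
      have P1A: "P1 (A z1) g = - \<phi>1 g" for g
      proof -
        have "P1 (y + w) g = P1 y g + P1 w g" using P1lin y(1) wB(1) unfolding clinear_on_fun_def by blast
        thus ?thesis unfolding Az1 y(2) P1w by simp
      qed
      have P2A: "P2 (A z1) = g2"
      proof -
        have "P2 (y + w) = P2 y + P2 w" using P2lin y(1) wB(1) unfolding clinear_on_def by blast
        thus ?thesis unfolding Az1 y(3) P2w by simp
      qed
      have mem: "(z1, z2) \<in> calA_dom DA A DB" using z1 z2 Az1B by (simp add: calA_dom_def)
      have e0: "Gamma0 A L1 P2 (z1, z2) = (g1, g2)" using z2 P2A by (simp add: Gamma0_def)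
      have e1: "Gamma1 A P1 L2 (z1, z2) = (\<phi>1, \<phi>2)" using z2 P1A by (simp add: Gamma1_def)
      have eq: "p = (\<lambda>f. (Gamma0 A L1 P2 f, Gamma1 A P1 L2 f)) (z1, z2)" unfolding pdef e0 e1 by simp
      show "p \<in> (\<lambda>f. (Gamma0 A L1 P2 f, Gamma1 A P1 L2 f)) ` calA_dom DA A DB"
        by (rule image_eqI[where f="\<lambda>f. (Gamma0 A L1 P2 f, Gamma1 A P1 L2 f)", OF eq mem])
    qed
  qed
  have gr: "\<forall>f\<in>calA_dom DA A DB. \<forall>g\<in>calA_dom DA A DB.
      Zh_inner A (calA A B f) g + Zh_inner A f (calA A B g)
      = prod_pairing (Gamma1 A P1 L2 f) (Gamma0 A L1 P2 g) + cnj (prod_pairing (Gamma1 A P1 L2 g) (Gamma0 A L1 P2 f))"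
  proof clarify
    fix z1 z2 u1 u2 assume "(z1, z2) \<in> calA_dom DA A DB" "(u1, u2) \<in> calA_dom DA A DB"
    hence z: "z1 \<in> DA" "z2 \<in> DA" "A z1 \<in> DB" "u1 \<in> DA" "u2 \<in> DA" "A u1 \<in> DB" by (auto simp: calA_dom_def)
    have G1: "- cinner (B (A z1)) u2 - cinner (A z1) (A u2) = P1 (A z1) (L1 u2) - cnj (L2 u2 (P2 (A z1)))"
      using green z by blast
    have G2: "- cinner (B (A u1)) z2 - cinner (A u1) (A z2) = P1 (A u1) (L1 z2) - cnj (L2 z2 (P2 (A u1)))"
      using green z by blast
    hence "cnj (- cinner (B (A u1)) z2 - cinner (A u1) (A z2)) = cnj (P1 (A u1) (L1 z2) - cnj (L2 z2 (P2 (A u1))))"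
      by simp
    hence G2': "- cinner z2 (B (A u1)) - cinner (A z2) (A u1) = cnj (P1 (A u1) (L1 z2)) - L2 z2 (P2 (A u1))"
      using cinner_commute[of z2 "B (A u1)"] cinner_commute[of "A z2" "A u1"] by simp
    show "Zh_inner A (calA A B (z1, z2)) (u1, u2) + Zh_inner A (z1, z2) (calA A B (u1, u2))
      = prod_pairing (Gamma1 A P1 L2 (z1, z2)) (Gamma0 A L1 P2 (u1, u2)) + cnj (prod_pairing (Gamma1 A P1 L2 (u1, u2)) (Gamma0 A L1 P2 (z1, z2)))"
      unfolding Zh_inner_def calA_def Gamma0_def Gamma1_def prod_pairing_def
      using G1 G2' by (simp add: algebra_simps)
  qed
  show ?thesis unfolding boundary_triplet_def using surj gr by blast
qed

end
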